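(* Let $\mathcal D=(S,Act,L,\varphi,\ell)$ be an MDP, let $\alpha_1,\alpha_2,\dots$ be general strategies for $\mathcal D$, and let $S_0\subseteq S$ satisfy $\liminf_{i\to\infty}\max\{d_{\mathcal D(\alpha_i)}(s,t):s,t\in S_0\}=0$. Then there exists a general strategy $\alpha$ for $\mathcal D$ such that all states of $S_0$ are pairwise probabilistically bisimilar in the LMC $\mathcal D(\alpha)$.
   Context: An MDP is $\mathcal D=(S,Act,L,\varphi,\ell)$ with finite $S,Act,L$, a partial function $\varphi:S\times Act\rightharpoonup\mathrm{Distr}(S)$ and labelling $\ell:S\to L$. A path is $s_0{\sf m}_1s_1\cdots{\sf m}_ns_n$ with $\varphi(s_i,{\sf m}_{i+1})$ defined and positive on $s_{i+1}$. A general strategy maps each path to a distribution over the actions available at its last state; it induces the LMC $\mathcal D(\alpha)$ whose states are paths, with $\tau(\rho)(\rho{\sf m}t)=\alpha(\rho)({\sf m})\varphi({\sf last}(\rho),{\sf m})(t)$ and label of $\rho$ the label of its last state; a state $s\in S$ is identified with the one-state path $s$. In an LMC $(S',L,\tau,\ell')$, probabilistic bisimilarity is the largest equivalence $R$ such that $(s,t)\in R$ implies $\ell'(s)=\ell'(t)$ and $\tau(s)(E)=\tau(t)(E)$ for each $R$-class $E$; the probabilistic bisimilarity distance $d$ is the least fixed point of $\Delta(e)(s,t)=1$ if labels differ and $\min_\omega\sum_{u,v}\omega(u,v)e(u,v)$ otherwise, over couplings $\omega$ of $\tau(s),\tau(t)$. *)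

theory Defs
  imports "HOL-Probability.Probability"
begin

text \<open>An MDP (S, Act, L, phi, lab): phi s m = None means phi is undefined at (s,m).\<close>

definition is_mdp ::
  "'s set \<Rightarrow> 'a set \<Rightarrow> 'l set \<Rightarrow> ('s \<Rightarrow> 'a \<Rightarrow> 's pmf option) \<Rightarrow> ('s \<Rightarrow> 'l) \<Rightarrow> bool" where
  "is_mdp S Act L phi lab \<longleftrightarrow>
     finite S \<and> finite Act \<and> finite L \<and> (\<forall>s\<in>S. lab s \<in> L) \<and>
     (\<forall>s m \<mu>. phi s m = Some \<mu> \<longrightarrow> s \<in> S \<and> m \<in> Act \<and> set_pmf \<mu> \<subseteq> S)"

text \<open>A path s0 m1 s1 ... mn sn is represented as (s0, [(m1,s1),...,(mn,sn)]).\<close>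

type_synonym ('s,'a) path = "'s \<times> ('a \<times> 's) list"

definition path_last :: "('s,'a) path \<Rightarrow> 's" where
  "path_last \<rho> = (if snd \<rho> = [] then fst \<rho> else snd (last (snd \<rho>)))"

definition path_ext :: "('s,'a) path \<Rightarrow> 'a \<Rightarrow> 's \<Rightarrow> ('s,'a) path" where
  "path_ext \<rho> m t = (fst \<rho>, snd \<rho> @ [(m, t)])"

fun valid_steps :: "('s \<Rightarrow> 'a \<Rightarrow> 's pmf option) \<Rightarrow> 's \<Rightarrow> ('a \<times> 's) list \<Rightarrow> bool" where
  "valid_steps phi s [] = True"
| "valid_steps phi s ((m, t) # xs) =
     ((\<exists>\<mu>. phi s m = Some \<mu> \<and> pmf \<mu> t > 0) \<and> valid_steps phi t xs)"

definition is_path :: "'s set \<Rightarrow> ('s \<Rightarrow> 'a \<Rightarrow> 's pmf option) \<Rightarrow> ('s,'a) path \<Rightarrow> bool" where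
  "is_path S phi \<rho> \<longleftrightarrow> fst \<rho> \<in> S \<and> valid_steps phi (fst \<rho>) (snd \<rho>)"

text \<open>A general strategy maps each path to a distribution over the actions available
  at its last state (its values on non-paths are irrelevant).\<close>

definition is_strategy ::
  "'s set \<Rightarrow> 'a set \<Rightarrow> ('s \<Rightarrow> 'a \<Rightarrow> 's pmf option) \<Rightarrow> (('s,'a) path \<Rightarrow> 'a pmf) \<Rightarrow> bool" where
  "is_strategy S Act phi \<alpha> \<longleftrightarrow>
     (\<forall>\<rho>. is_path S phi \<rho> \<longrightarrow>
        set_pmf (\<alpha> \<rho>) \<subseteq> {m \<in> Act. phi (path_last \<rho>) m \<noteq> None})"

text \<open>Transition function of the induced LMC D(alpha):
  tau(rho)(rho m t) = alpha(rho)(m) * phi(last rho, m)(t).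
  (The branch for undefined phi has probability 0 from every path when alpha is a strategy.)\<close>

definition induced_trans ::
  "('s \<Rightarrow> 'a \<Rightarrow> 's pmf option) \<Rightarrow> (('s,'a) path \<Rightarrow> 'a pmf) \<Rightarrow> ('s,'a) path \<Rightarrow> ('s,'a) path pmf" where
  "induced_trans phi \<alpha> \<rho> =
     bind_pmf (\<alpha> \<rho>) (\<lambda>m. case phi (path_last \<rho>) m of
                            None \<Rightarrow> return_pmf \<rho>
                          | Some \<mu> \<Rightarrow> map_pmf (path_ext \<rho> m) \<mu>)"

definition induced_label :: "('s \<Rightarrow> 'l) \<Rightarrow> ('s,'a) path \<Rightarrow> 'l" where
  "induced_label lab \<rho> = lab (path_last \<rho>)"

definition state_path :: "'s \<Rightarrow> ('s,'a) path" where
  "state_path s = (s, [])"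

definition prob_bisimulation :: "('x \<Rightarrow> 'x pmf) \<Rightarrow> ('x \<Rightarrow> 'l) \<Rightarrow> ('x \<times> 'x) set \<Rightarrow> bool" where
  "prob_bisimulation \<tau> lab R \<longleftrightarrow> equiv UNIV R \<and>
     (\<forall>(s,t)\<in>R. lab s = lab t \<and>
        (\<forall>E \<in> UNIV // R. measure_pmf.prob (\<tau> s) E = measure_pmf.prob (\<tau> t) E))"

definition prob_bisimilar :: "('x \<Rightarrow> 'x pmf) \<Rightarrow> ('x \<Rightarrow> 'l) \<Rightarrow> 'x \<Rightarrow> 'x \<Rightarrow> bool" where
  "prob_bisimilar \<tau> lab s t \<longleftrightarrow> (\<exists>R. prob_bisimulation \<tau> lab R \<and> (s, t) \<in> R)"

definition couplings :: "'x pmf \<Rightarrow> 'x pmf \<Rightarrow> ('x \<times> 'x) pmf set" where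
  "couplings \<mu> \<nu> = {\<omega>. map_pmf fst \<omega> = \<mu> \<and> map_pmf snd \<omega> = \<nu>}"

definition bisim_Delta ::
  "('x \<Rightarrow> 'x pmf) \<Rightarrow> ('x \<Rightarrow> 'l) \<Rightarrow> ('x \<Rightarrow> 'x \<Rightarrow> ennreal) \<Rightarrow> ('x \<Rightarrow> 'x \<Rightarrow> ennreal)" where
  "bisim_Delta \<tau> lab e = (\<lambda>s t. if lab s \<noteq> lab t then 1
      else (INF \<omega> \<in> couplings (\<tau> s) (\<tau> t). \<integral>\<^sup>+ uv. e (fst uv) (snd uv) \<partial>measure_pmf \<omega>))"

definition bisim_dist :: "('x \<Rightarrow> 'x pmf) \<Rightarrow> ('x \<Rightarrow> 'l) \<Rightarrow> 'x \<Rightarrow> 'x \<Rightarrow> ennreal" where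
  "bisim_dist \<tau> lab = lfp (bisim_Delta \<tau> lab)"

end

theory Submission
  imports Defs "HOL-Library.Diagonal_Subsequence"
begin


fun bn :: "('x \<Rightarrow> 'x pmf) \<Rightarrow> ('x \<Rightarrow> 'l) \<Rightarrow> nat \<Rightarrow> ('x\<times>'x) set" where
  "bn \<tau> lab 0 = UNIV"
| "bn \<tau> lab (Suc n) = {(x,y). (x,y) \<in> bn \<tau> lab n \<and> lab x = lab y \<and>
     (\<forall>E\<in>UNIV // bn \<tau> lab n. measure_pmf.prob (\<tau> x) E = measure_pmf.prob (\<tau> y) E)}"

lemma bn_equiv: "equiv UNIV (bn \<tau> lab n)"
proof (induction n)
  case 0 then show ?case by (simp add: equiv_def refl_on_def sym_def trans_def)
next
  case (Suc n)
  have rn: "(x,x) \<in> bn \<tau> lab n" for x using Suc unfolding equiv_def refl_on_def by blast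
  have sn: "(y,x) \<in> bn \<tau> lab n" if "(x,y) \<in> bn \<tau> lab n" for x y
    using Suc that unfolding equiv_def sym_def by blast
  have tn: "(x,z) \<in> bn \<tau> lab n" if "(x,y) \<in> bn \<tau> lab n" "(y,z) \<in> bn \<tau> lab n" for x y z
    using Suc that unfolding equiv_def trans_def by blast
  have r: "refl (bn \<tau> lab (Suc n))"
    unfolding refl_on_def using rn by simp
  have s: "sym (bn \<tau> lab (Suc n))"
  proof (rule symI)
    fix x y assume "(x,y) \<in> bn \<tau> lab (Suc n)"
    then show "(y,x) \<in> bn \<tau> lab (Suc n)" using sn by simp
  qed
  have t: "trans (bn \<tau> lab (Suc n))"
  proof (rule transI)
    fix x y z assume a: "(x,y) \<in> bn \<tau> lab (Suc n)" and b: "(y,z) \<in> bn \<tau> lab (Suc n)"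
    have "(x,z) \<in> bn \<tau> lab n" using a b tn by (simp only: bn.simps mem_Collect_eq case_prod_conv) blast
    moreover have "lab x = lab z" using a b by simp
    moreover have "\<forall>E\<in>UNIV // bn \<tau> lab n. measure_pmf.prob (\<tau> x) E = measure_pmf.prob (\<tau> z) E"
      using a b by simp
    ultimately show "(x,z) \<in> bn \<tau> lab (Suc n)" by simp
  qed
  show ?case unfolding equiv_def using r s t by (intro conjI) (auto simp: refl_on_def)
qed

lemma bn_Suc_sub: "bn \<tau> lab (Suc n) \<subseteq> bn \<tau> lab n" by auto

lemma bn_anti: "m \<le> n \<Longrightarrow> bn \<tau> lab n \<subseteq> bn \<tau> lab m"
  by (induction n rule: dec_induct) (use bn_Suc_sub in blast)+

lemma bn_bisim:
  assumes fin: "\<And>x. finite (set_pmf (\<tau> x))"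
  shows "prob_bisimulation \<tau> lab (\<Inter>n. bn \<tau> lab n)"
proof -
  define B where "B = (\<Inter>n. bn \<tau> lab n)"
  have eqB: "equiv UNIV B"
  proof (rule equivI)
    show "refl B" unfolding B_def refl_on_def using equiv_class_self[OF bn_equiv[of \<tau> lab]] by auto
    show "sym B" unfolding B_def
      by (rule symI) (use bn_equiv[of \<tau> lab] in \<open>blast elim: equivE intro: symD\<close>)
    show "trans B" unfolding B_def
      by (rule transI) (use bn_equiv[of \<tau> lab] in \<open>blast elim: equivE intro: transD\<close>)
  qed simp
  have main: "measure_pmf.prob (\<tau> x) E = measure_pmf.prob (\<tau> y) E"
    if xy: "(x,y) \<in> B" and E: "E \<in> UNIV // B" for x y E
  proof -
    define F where "F = set_pmf (\<tau> x) \<union> set_pmf (\<tau> y)"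
    have finF: "finite (F \<times> F)" using fin unfolding F_def by auto
    define c where "c n = card (bn \<tau> lab n \<inter> F \<times> F)" for n
    obtain N where N: "\<forall>n. c N \<le> c n" using ex_has_least_nat[of "\<lambda>_. True" 0 c] by auto
    have stab: "bn \<tau> lab n \<inter> F \<times> F = bn \<tau> lab N \<inter> F \<times> F" if "n \<ge> N" for n
    proof -
      have sub: "bn \<tau> lab n \<inter> F \<times> F \<subseteq> bn \<tau> lab N \<inter> F \<times> F" using bn_anti[OF that] by blast
      show ?thesis
        using card_subset_eq[OF finite_subset[OF _ finF] sub] N[rule_format, of n] 
          card_mono[OF finite_subset[OF _ finF] sub] unfolding c_def by auto
    qed
    have BF: "B \<inter> F \<times> F = bn \<tau> lab N \<inter> F \<times> F"
    proof
      show "B \<inter> F \<times> F \<subseteq> bn \<tau> lab N \<inter> F \<times> F" unfolding B_def by blast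
      show "bn \<tau> lab N \<inter> F \<times> F \<subseteq> B \<inter> F \<times> F"
      proof
        fix p assume p: "p \<in> bn \<tau> lab N \<inter> F \<times> F"
        have "p \<in> bn \<tau> lab n" for n
        proof (cases "n \<le> N")
          case True then show ?thesis using bn_anti[OF True] p by blast
        next
          case False then have "n \<ge> N" by simp
          then show ?thesis using stab[of n] p by blast
        qed
        then show "p \<in> B \<inter> F \<times> F" using p unfolding B_def by blast
      qed
    qed
    have xyN: "(x,y) \<in> bn \<tau> lab (Suc N)" using xy unfolding B_def by blast
    show ?thesis
    proof (cases "E \<inter> F = {}")
      case True
      have "measure_pmf.prob (\<tau> x) E = measure_pmf.prob (\<tau> x) (E \<inter> set_pmf (\<tau> x))"
        by (simp add: measure_Int_set_pmf)
      also have "E \<inter> set_pmf (\<tau> x) = {}" using True unfolding F_def by blast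
      finally have 1: "measure_pmf.prob (\<tau> x) E = 0" by simp
      have "measure_pmf.prob (\<tau> y) E = measure_pmf.prob (\<tau> y) (E \<inter> set_pmf (\<tau> y))"
        by (simp add: measure_Int_set_pmf)
      also have "E \<inter> set_pmf (\<tau> y) = {}" using True unfolding F_def by blast
      finally show ?thesis using 1 by simp
    next
      case False
      then obtain w where w: "w \<in> E" "w \<in> F" by blast
      obtain v where v: "E = B `` {v}" using E by (rule quotientE)
      have "(v,w) \<in> B" using v w by blast
      then have Ew: "E = B `` {w}" using v equiv_class_eq[OF eqB] by blast
      define E' where "E' = bn \<tau> lab N `` {w}"
      have E'q: "E' \<in> UNIV // bn \<tau> lab N" unfolding E'_def by (rule quotientI) simp
      have EF: "E \<inter> F = E' \<inter> F" unfolding Ew E'_def using BF w(2) by blast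
      have "measure_pmf.prob (\<tau> x) E = measure_pmf.prob (\<tau> x) E'"
      proof -
        have "measure_pmf.prob (\<tau> x) E = measure_pmf.prob (\<tau> x) (E \<inter> set_pmf (\<tau> x))"
          by (simp add: measure_Int_set_pmf)
        also have "E \<inter> set_pmf (\<tau> x) = E' \<inter> set_pmf (\<tau> x)" using EF unfolding F_def by blast
        also have "measure_pmf.prob (\<tau> x) \<dots> = measure_pmf.prob (\<tau> x) E'"
          by (simp add: measure_Int_set_pmf)
        finally show ?thesis .
      qed
      moreover have "measure_pmf.prob (\<tau> y) E = measure_pmf.prob (\<tau> y) E'"
      proof -
        have "measure_pmf.prob (\<tau> y) E = measure_pmf.prob (\<tau> y) (E \<inter> set_pmf (\<tau> y))"
          by (simp add: measure_Int_set_pmf)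
        also have "E \<inter> set_pmf (\<tau> y) = E' \<inter> set_pmf (\<tau> y)" using EF unfolding F_def by blast
        also have "measure_pmf.prob (\<tau> y) \<dots> = measure_pmf.prob (\<tau> y) E'"
          by (simp add: measure_Int_set_pmf)
        finally show ?thesis .
      qed
      moreover have "measure_pmf.prob (\<tau> x) E' = measure_pmf.prob (\<tau> y) E'"
        using xyN E'q by (simp only: bn.simps mem_Collect_eq case_prod_conv)
      ultimately show ?thesis by simp
    qed
  qed
  have lab: "lab x = lab y" if "(x,y) \<in> B" for x y
  proof -
    have "(x,y) \<in> bn \<tau> lab (Suc 0)" using that unfolding B_def by blast
    then show ?thesis by simp
  qed
  show ?thesis unfolding prob_bisimulation_def B_def[symmetric]
  proof (intro conjI eqB ballI)
    fix p assume "p \<in> B"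
    then show "case p of (s, t) \<Rightarrow> lab s = lab t \<and> (\<forall>E\<in>UNIV // B. measure_pmf.prob (\<tau> s) E = measure_pmf.prob (\<tau> t) E)"
      using lab main by (cases p) simp
  qed
qed




lemma Delta_mono: "mono (bisim_Delta \<tau> lab)"
  unfolding mono_def bisim_Delta_def le_fun_def
  by (auto intro!: INF_mono' nn_integral_mono)

lemma Delta_pow_le_dist: "(bisim_Delta \<tau> lab ^^ n) \<bottom> \<le> bisim_dist \<tau> lab"
proof (induction n)
  case 0 show ?case by (simp only: funpow_0) (rule bot_least)
next
  case (Suc n)
  have "(bisim_Delta \<tau> lab ^^ Suc n) \<bottom> = bisim_Delta \<tau> lab ((bisim_Delta \<tau> lab ^^ n) \<bottom>)" by simp
  also have "\<dots> \<le> bisim_Delta \<tau> lab (bisim_dist \<tau> lab)" by (rule monoD[OF Delta_mono Suc])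
  also have "\<dots> = bisim_dist \<tau> lab" unfolding bisim_dist_def
    by (rule lfp_unfold[OF Delta_mono, symmetric])
  finally show ?case .
qed

lemma Delta_pow_mono: "(bisim_Delta \<tau> lab ^^ n) \<bottom> \<le> (bisim_Delta \<tau> lab ^^ Suc n) \<bottom>"
proof (induction n)
  case 0 show ?case by (simp only: funpow_0) (rule bot_least)
next
  case (Suc n)
  have "bisim_Delta \<tau> lab ((bisim_Delta \<tau> lab ^^ n) \<bottom>) \<le> bisim_Delta \<tau> lab ((bisim_Delta \<tau> lab ^^ Suc n) \<bottom>)"
    by (rule monoD[OF Delta_mono Suc])
  then show ?case by (simp only: funpow.simps o_apply)
qed

lemma prob_bind_finite:
  assumes "finite A" "set_pmf p \<subseteq> A"
  shows "measure_pmf.prob (bind_pmf p f) E = (\<Sum>m\<in>A. pmf p m * measure_pmf.prob (f m) E)"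
proof -
  have "emeasure (measure_pmf (bind_pmf p f)) E = (\<integral>\<^sup>+m. emeasure (f m) E \<partial>p)" by simp
  also have "\<dots> = (\<Sum>m\<in>set_pmf p. emeasure (f m) E * pmf p m)"
    using assms by (intro nn_integral_measure_pmf_finite) (auto intro: finite_subset)
  also have "\<dots> = (\<Sum>m\<in>A. emeasure (f m) E * pmf p m)"
    using assms by (intro sum.mono_neutral_left) (auto simp: set_pmf_eq)
  also have "\<dots> = (\<Sum>m\<in>A. ennreal (pmf p m * measure_pmf.prob (f m) E))"
    by (simp add: measure_pmf.emeasure_eq_measure ennreal_mult mult.commute)
  also have "\<dots> = ennreal (\<Sum>m\<in>A. pmf p m * measure_pmf.prob (f m) E)"
    by (rule sum_ennreal) simp
  finally have "ennreal (measure_pmf.prob (bind_pmf p f) E) = ennreal (\<Sum>m\<in>A. pmf p m * measure_pmf.prob (f m) E)"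
    by (simp add: measure_pmf.emeasure_eq_measure)
  then show ?thesis by (subst (asm) ennreal_inj) (auto intro: sum_nonneg)
qed

lemma valid_steps_snoc:
  "valid_steps phi s (xs @ [(m,t)]) \<longleftrightarrow> valid_steps phi s xs \<and>
     (\<exists>\<mu>. phi (if xs = [] then s else snd (last xs)) m = Some \<mu> \<and> pmf \<mu> t > 0)"
proof (induction xs arbitrary: s)
  case Nil then show ?case by simp
next
  case (Cons a xs)
  obtain m' t' where a: "a = (m',t')" by force
  show ?case using Cons[of t'] unfolding a by auto
qed

lemma path_last_ext[simp]: "path_last (path_ext \<rho> m t) = t"
  by (simp add: path_last_def path_ext_def)

lemma is_path_ext:
  assumes "is_path S phi \<rho>" "phi (path_last \<rho>) m = Some \<mu>" "pmf \<mu> t > 0"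
  shows "is_path S phi (path_ext \<rho> m t)"
  using assms unfolding is_path_def path_ext_def path_last_def
  by (auto simp: valid_steps_snoc)

definition succs :: "'s set \<Rightarrow> 'a set \<Rightarrow> ('s \<Rightarrow> 'a \<Rightarrow> 's pmf option) \<Rightarrow> ('s,'a) path \<Rightarrow> ('s,'a) path set" where
  "succs S Act phi \<rho> = (\<lambda>(m,t). path_ext \<rho> m t) ` (Act \<times> S) \<inter> {x. is_path S phi x}"

lemma finite_succs: "is_mdp S Act L phi lab \<Longrightarrow> finite (succs S Act phi \<rho>)"
  unfolding succs_def is_mdp_def by auto

lemma strat_supp:
  assumes "is_strategy S Act phi \<alpha>" "is_path S phi \<rho>"
  shows "set_pmf (\<alpha> \<rho>) \<subseteq> {m \<in> Act. phi (path_last \<rho>) m \<noteq> None}"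
  using assms unfolding is_strategy_def by blast

lemma trans_support:
  assumes mdp: "is_mdp S Act L phi lab" and st: "is_strategy S Act phi \<alpha>" and p: "is_path S phi \<rho>"
  shows "set_pmf (induced_trans phi \<alpha> \<rho>) \<subseteq> succs S Act phi \<rho>"
proof
  fix x assume "x \<in> set_pmf (induced_trans phi \<alpha> \<rho>)"
  then obtain m where m: "m \<in> set_pmf (\<alpha> \<rho>)" and
    x: "x \<in> set_pmf (case phi (path_last \<rho>) m of None \<Rightarrow> return_pmf \<rho> | Some \<mu> \<Rightarrow> map_pmf (path_ext \<rho> m) \<mu>)"
    unfolding induced_trans_def by auto
  have mA: "m \<in> Act" and md: "phi (path_last \<rho>) m \<noteq> None" using strat_supp[OF st p] m by auto
  then obtain \<mu> where \<mu>: "phi (path_last \<rho>) m = Some \<mu>" by auto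
  then obtain t where t: "t \<in> set_pmf \<mu>" and xt: "x = path_ext \<rho> m t" using x by auto
  have tS: "t \<in> S" using mdp \<mu> t unfolding is_mdp_def by blast
  have "is_path S phi x" using is_path_ext[OF p \<mu>] t xt by (simp add: pmf_positive)
  then show "x \<in> succs S Act phi \<rho>" unfolding succs_def using mA tS xt by auto
qed

lemma succs_path: "x \<in> succs S Act phi \<rho> \<Longrightarrow> is_path S phi x"
  unfolding succs_def by auto

lemma trans_finite_support:
  assumes mdp: "is_mdp S Act L phi lab" and fin: "finite (set_pmf (\<alpha> \<rho>))"
  shows "finite (set_pmf (induced_trans phi \<alpha> \<rho>))"
proof -
  have "finite (set_pmf (case phi (path_last \<rho>) m of None \<Rightarrow> return_pmf \<rho> | Some \<mu> \<Rightarrow> map_pmf (path_ext \<rho> m) \<mu>))" for m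
  proof (cases "phi (path_last \<rho>) m")
    case (Some \<mu>)
    have "set_pmf \<mu> \<subseteq> S" using mdp Some unfolding is_mdp_def by blast
    then have "finite (set_pmf \<mu>)" using mdp unfolding is_mdp_def by (auto intro: finite_subset)
    then show ?thesis using Some by simp
  qed simp
  then show ?thesis unfolding induced_trans_def set_bind_pmf using fin by (intro finite_UN_I)
qed

lemma trans_prob:
  assumes mdp: "is_mdp S Act L phi lab" and st: "is_strategy S Act phi \<alpha>" and p: "is_path S phi \<rho>"
  shows "measure_pmf.prob (induced_trans phi \<alpha> \<rho>) E = (\<Sum>m\<in>Act. pmf (\<alpha> \<rho>) m *
     measure_pmf.prob (case phi (path_last \<rho>) m of None \<Rightarrow> return_pmf \<rho> | Some \<mu> \<Rightarrow> map_pmf (path_ext \<rho> m) \<mu>) E)"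
proof -
  have "finite Act" using mdp unfolding is_mdp_def by blast
  moreover have "set_pmf (\<alpha> \<rho>) \<subseteq> Act" using strat_supp[OF st p] by blast
  ultimately show ?thesis unfolding induced_trans_def by (rule prob_bind_finite)
qed




lemma class_closed:
  assumes "E \<in> UNIV // R" "equiv UNIV R" "u \<in> E" "(u,v) \<in> R"
  shows "v \<in> E"
proof -
  obtain w where w: "E = R `` {w}" using assms(1) by (rule quotientE)
  have "(w,u) \<in> R" using assms(3) w by blast
  then have "(w,v) \<in> R" using assms(2,4) unfolding equiv_def trans_def by blast
  then show ?thesis using w by blast
qed

lemma close_eq:
  fixes A B :: real
  assumes "\<And>\<epsilon>. \<epsilon> > 0 \<Longrightarrow> \<bar>A - B\<bar> < \<epsilon>"
  shows "A = B"
proof (rule ccontr)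
  assume "A \<noteq> B"
  then have "\<bar>A - B\<bar> > 0" by simp
  from assms[OF this] show False by simp
qed

lemma trans_prob_tendsto:
  assumes mdp: "is_mdp S Act L phi lab" and strat: "\<And>k. is_strategy S Act phi (\<beta> k)"
    and st: "is_strategy S Act phi \<alpha>" and p: "is_path S phi \<rho>"
    and conv: "\<And>m. (\<lambda>k. pmf (\<beta> k \<rho>) m) \<longlonglongrightarrow> pmf (\<alpha> \<rho>) m"
  shows "(\<lambda>k. measure_pmf.prob (induced_trans phi (\<beta> k) \<rho>) E) \<longlonglongrightarrow> measure_pmf.prob (induced_trans phi \<alpha> \<rho>) E"
proof -
  define g where "g m = measure_pmf.prob (case phi (path_last \<rho>) m of None \<Rightarrow> return_pmf \<rho> | Some \<mu> \<Rightarrow> map_pmf (path_ext \<rho> m) \<mu>) E" for m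
  have "(\<lambda>k. \<Sum>m\<in>Act. pmf (\<beta> k \<rho>) m * g m) \<longlonglongrightarrow> (\<Sum>m\<in>Act. pmf (\<alpha> \<rho>) m * g m)"
    by (intro tendsto_sum tendsto_mult_right conv)
  moreover have "measure_pmf.prob (induced_trans phi (\<beta> k) \<rho>) E = (\<Sum>m\<in>Act. pmf (\<beta> k \<rho>) m * g m)" for k
    unfolding g_def by (rule trans_prob[OF mdp strat p])
  moreover have "measure_pmf.prob (induced_trans phi \<alpha> \<rho>) E = (\<Sum>m\<in>Act. pmf (\<alpha> \<rho>) m * g m)"
    unfolding g_def by (rule trans_prob[OF mdp st p])
  ultimately show ?thesis by simp
qed

lemma core:
  fixes S :: "'s set" and Act :: "'a set" and lab :: "'s \<Rightarrow> 'l"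
  assumes mdp: "is_mdp S Act L phi lab"
    and strat: "\<And>k. is_strategy S Act phi (\<beta> k)"
    and st: "is_strategy S Act phi \<alpha>"
    and conv: "\<And>\<rho> m. is_path S phi \<rho> \<Longrightarrow> (\<lambda>k. pmf (\<beta> k \<rho>) m) \<longlonglongrightarrow> pmf (\<alpha> \<rho>) m"
  shows "is_path S phi \<rho> \<Longrightarrow> is_path S phi \<sigma> \<Longrightarrow>
    (\<And>\<delta>. \<delta> > 0 \<Longrightarrow> \<exists>\<^sub>F k in sequentially.
        (bisim_Delta (induced_trans phi (\<beta> k)) (induced_label lab) ^^ n) \<bottom> \<rho> \<sigma> < \<delta>) \<Longrightarrow>
    (\<rho>,\<sigma>) \<in> bn (induced_trans phi \<alpha>) (induced_label lab) n"
proof (induction n arbitrary: \<rho> \<sigma>)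
  case 0 then show ?case by simp
next
  case (Suc n)
  define lb :: "('s,'a) path \<Rightarrow> 'l" where "lb = induced_label lab"
  define \<tau> where "\<tau> = induced_trans phi \<alpha>"
  define \<tau>k where "\<tau>k k = induced_trans phi (\<beta> k)" for k
  define D where "D n k = (bisim_Delta (\<tau>k k) lb ^^ n) \<bottom>" for n k
  define R where "R = bn \<tau> lb n"
  have eqR: "equiv UNIV R" unfolding R_def by (rule bn_equiv)
  note p\<rho> = Suc.prems(1) and p\<sigma> = Suc.prems(2)
  have H: "\<exists>\<^sub>F k in sequentially. D (Suc n) k \<rho> \<sigma> < \<delta>" if "\<delta> > 0" for \<delta>
    using Suc.prems(3)[OF that] unfolding D_def \<tau>k_def lb_def .
  have Dunf: "D (Suc n) k u v = bisim_Delta (\<tau>k k) lb (D n k) u v" for k u v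
    unfolding D_def by simp
  have Dmono: "D n k u v \<le> D (Suc n) k u v" for k u v
  proof -
    have "D n k \<le> D (Suc n) k" unfolding D_def by (rule Delta_pow_mono)
    then show ?thesis unfolding le_fun_def by blast
  qed
  have IH: "(u,v) \<in> R" if "is_path S phi u" "is_path S phi v"
    "\<And>\<delta>. \<delta> > 0 \<Longrightarrow> \<exists>\<^sub>F k in sequentially. D n k u v < \<delta>" for u v
    using Suc.IH[OF that(1,2)] that(3) unfolding R_def D_def \<tau>k_def lb_def \<tau>_def by blast
  have inn: "(\<rho>,\<sigma>) \<in> R"
  proof (rule IH[OF p\<rho> p\<sigma>])
    fix \<delta> :: ennreal assume "\<delta> > 0"
    show "\<exists>\<^sub>F k in sequentially. D n k \<rho> \<sigma> < \<delta>"
      using H[OF \<open>\<delta> > 0\<close>] by (rule frequently_elim1) (rule le_less_trans[OF Dmono])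
  qed
  have labs: "lb \<rho> = lb \<sigma>"
  proof (rule ccontr)
    assume ne: "lb \<rho> \<noteq> lb \<sigma>"
    obtain k where "D (Suc n) k \<rho> \<sigma> < 1" using frequently_ex[OF H[of 1]] by auto
    then show False using ne unfolding Dunf bisim_Delta_def by simp
  qed
  define bad where "bad = {p \<in> succs S Act phi \<rho> \<times> succs S Act phi \<sigma>. p \<notin> R}"
  have finbad: "finite bad" unfolding bad_def using finite_succs[OF mdp] by auto
  have badc: "\<exists>c>0. \<forall>\<^sub>F k in sequentially. c \<le> D n k (fst p) (snd p)" if "p \<in> bad" for p
  proof (rule ccontr)
    assume a: "\<not> (\<exists>c>0. \<forall>\<^sub>F k in sequentially. c \<le> D n k (fst p) (snd p))"
    have "p \<in> R"
    proof -
      have "(fst p, snd p) \<in> R"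
      proof (rule IH)
        have f1: "fst p \<in> succs S Act phi \<rho>" and f2: "snd p \<in> succs S Act phi \<sigma>"
          using that unfolding bad_def by auto
        show "is_path S phi (fst p)" by (rule succs_path[OF f1])
        show "is_path S phi (snd p)" by (rule succs_path[OF f2])
        fix \<delta> :: ennreal assume "\<delta> > 0"
        then have "\<not> (\<forall>\<^sub>F k in sequentially. \<delta> \<le> D n k (fst p) (snd p))" using a by blast
        then show "\<exists>\<^sub>F k in sequentially. D n k (fst p) (snd p) < \<delta>"
          unfolding frequently_def by (simp add: not_less)
      qed
      then show ?thesis by simp
    qed
    then show False using that unfolding bad_def by blast
  qed
  then obtain cf where cf: "\<And>p. p \<in> bad \<Longrightarrow> cf p > 0 \<and> (\<forall>\<^sub>F k in sequentially. cf p \<le> D n k (fst p) (snd p))"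
    by metis
  define c where "c = Min (insert 1 (cf ` bad))"
  have c_pos: "c > 0" unfolding c_def using finbad cf by (subst Min_gr_iff) auto
  have c_le1: "c \<le> 1" unfolding c_def using finbad by simp
  have c_le: "c \<le> cf p" if "p \<in> bad" for p unfolding c_def using finbad that by simp
  have ev_bad: "\<forall>\<^sub>F k in sequentially. \<forall>p\<in>bad. c \<le> D n k (fst p) (snd p)"
  proof -
    have "\<forall>\<^sub>F k in sequentially. \<forall>p\<in>bad. cf p \<le> D n k (fst p) (snd p)"
      using finbad cf by (subst eventually_ball_finite_distrib) auto
    then show ?thesis by (rule eventually_mono) (use c_le order_trans in blast)
  qed
  have classes: "measure_pmf.prob (\<tau> \<rho>) E = measure_pmf.prob (\<tau> \<sigma>) E" if E: "E \<in> UNIV // R" for E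
  proof (rule close_eq)
    fix \<epsilon> :: real assume \<epsilon>: "\<epsilon> > 0"
    define a where "a k = measure_pmf.prob (\<tau>k k \<rho>) E" for k
    define b where "b k = measure_pmf.prob (\<tau>k k \<sigma>) E" for k
    have ta: "a \<longlonglongrightarrow> measure_pmf.prob (\<tau> \<rho>) E" unfolding a_def \<tau>k_def \<tau>_def
      by (rule trans_prob_tendsto[OF mdp strat st p\<rho> conv[OF p\<rho>]])
    have tb: "b \<longlonglongrightarrow> measure_pmf.prob (\<tau> \<sigma>) E" unfolding b_def \<tau>k_def \<tau>_def
      by (rule trans_prob_tendsto[OF mdp strat st p\<sigma> conv[OF p\<sigma>]])
    have e3: "\<epsilon>/3 > 0" using \<epsilon> by simp
    have eva: "\<forall>\<^sub>F k in sequentially. dist (a k) (measure_pmf.prob (\<tau> \<rho>) E) < \<epsilon>/3"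
      using ta e3 by (rule tendstoD)
    have evb: "\<forall>\<^sub>F k in sequentially. dist (b k) (measure_pmf.prob (\<tau> \<sigma>) E) < \<epsilon>/3"
      using tb e3 by (rule tendstoD)
    have cpos: "c * ennreal (\<epsilon>/3) > 0" using c_pos e3
      by (simp add: ennreal_zero_less_mult_iff)
    have fr: "\<exists>\<^sub>F k in sequentially. ((dist (a k) (measure_pmf.prob (\<tau> \<rho>) E) < \<epsilon>/3 \<and>
        dist (b k) (measure_pmf.prob (\<tau> \<sigma>) E) < \<epsilon>/3) \<and> (\<forall>p\<in>bad. c \<le> D n k (fst p) (snd p))) \<and>
        D (Suc n) k \<rho> \<sigma> < c * ennreal (\<epsilon>/3)"
      by (rule frequently_eventually_conj[OF H[OF cpos]])
         (intro eventually_conj eva evb ev_bad)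
    then obtain k where k1: "dist (a k) (measure_pmf.prob (\<tau> \<rho>) E) < \<epsilon>/3"
      and k2: "dist (b k) (measure_pmf.prob (\<tau> \<sigma>) E) < \<epsilon>/3"
      and k3: "\<forall>p\<in>bad. c \<le> D n k (fst p) (snd p)"
      and k4: "D (Suc n) k \<rho> \<sigma> < c * ennreal (\<epsilon>/3)"
      using frequently_ex by blast
    have "(INF \<omega> \<in> couplings (\<tau>k k \<rho>) (\<tau>k k \<sigma>). \<integral>\<^sup>+ uv. D n k (fst uv) (snd uv) \<partial>measure_pmf \<omega>)
          < c * ennreal (\<epsilon>/3)"
      using k4 labs unfolding Dunf bisim_Delta_def by simp
    then obtain \<omega> where \<omega>: "\<omega> \<in> couplings (\<tau>k k \<rho>) (\<tau>k k \<sigma>)"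
      and int: "(\<integral>\<^sup>+ uv. D n k (fst uv) (snd uv) \<partial>measure_pmf \<omega>) < c * ennreal (\<epsilon>/3)"
      unfolding INF_less_iff by blast
    have m1: "map_pmf fst \<omega> = \<tau>k k \<rho>" and m2: "map_pmf snd \<omega> = \<tau>k k \<sigma>"
      using \<omega> unfolding couplings_def by auto
    define X where "X = - R"
    have supp: "uv \<in> succs S Act phi \<rho> \<times> succs S Act phi \<sigma>" if "uv \<in> set_pmf \<omega>" for uv
    proof -
      have "fst uv \<in> set_pmf (map_pmf fst \<omega>)" "snd uv \<in> set_pmf (map_pmf snd \<omega>)"
        using that by auto
      then show ?thesis using m1 m2 trans_support[OF mdp strat p\<rho>, of k] trans_support[OF mdp strat p\<sigma>, of k]
        unfolding \<tau>k_def by (cases uv) auto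
    qed
    have "c * emeasure (measure_pmf \<omega>) X = (\<integral>\<^sup>+ uv. c * indicator X uv \<partial>measure_pmf \<omega>)"
      by (rule nn_integral_cmult_indicator[symmetric]) simp
    also have "\<dots> \<le> (\<integral>\<^sup>+ uv. D n k (fst uv) (snd uv) \<partial>measure_pmf \<omega>)"
    proof (rule nn_integral_mono_AE)
      show "AE uv in measure_pmf \<omega>. c * indicator X uv \<le> D n k (fst uv) (snd uv)"
        unfolding AE_measure_pmf_iff
      proof
        fix uv assume uv: "uv \<in> set_pmf \<omega>"
        show "c * indicator X uv \<le> D n k (fst uv) (snd uv)"
        proof (cases "uv \<in> X")
          case True
          then have "uv \<in> bad" using supp[OF uv] unfolding bad_def X_def by auto
          then show ?thesis using k3 True by simp
        next
          case False then show ?thesis by simp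
        qed
      qed
    qed
    also have "\<dots> < c * ennreal (\<epsilon>/3)" by (rule int)
    finally have lt: "c * emeasure (measure_pmf \<omega>) X < c * ennreal (\<epsilon>/3)" .
    have mX: "measure_pmf.prob \<omega> X < \<epsilon>/3"
    proof (rule ccontr)
      assume "\<not> measure_pmf.prob \<omega> X < \<epsilon>/3"
      then have "ennreal (\<epsilon>/3) \<le> emeasure (measure_pmf \<omega>) X"
        by (simp add: measure_pmf.emeasure_eq_measure)
      then have "c * ennreal (\<epsilon>/3) \<le> c * emeasure (measure_pmf \<omega>) X" by (rule mult_left_mono) simp
      then show False using lt by simp
    qed
    have ak: "a k = measure_pmf.prob \<omega> (fst -` E)" unfolding a_def m1[symmetric] by simp
    have bk: "b k = measure_pmf.prob \<omega> (snd -` E)" unfolding b_def m2[symmetric] by simp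
    have sub1: "fst -` E \<subseteq> snd -` E \<union> X"
    proof
      fix uv :: "('s,'a) path \<times> ('s,'a) path" assume "uv \<in> fst -` E"
      then show "uv \<in> snd -` E \<union> X" unfolding X_def using class_closed[OF E eqR]
        by (cases uv) auto
    qed
    have sub2: "snd -` E \<subseteq> fst -` E \<union> X"
    proof
      fix uv :: "('s,'a) path \<times> ('s,'a) path" assume "uv \<in> snd -` E"
      moreover have "(snd uv, fst uv) \<in> R" if "uv \<in> R" using that eqR unfolding equiv_def sym_def
        by (cases uv) auto
      ultimately show "uv \<in> fst -` E \<union> X" unfolding X_def using class_closed[OF E eqR]
        by (cases uv) auto
    qed
    have "a k \<le> b k + measure_pmf.prob \<omega> X"
    proof -
      have "a k \<le> measure_pmf.prob \<omega> (snd -` E \<union> X)" unfolding ak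
        by (rule measure_pmf.finite_measure_mono[OF sub1]) simp
      also have "\<dots> \<le> b k + measure_pmf.prob \<omega> X" unfolding bk
        by (rule measure_Un_le) simp_all
      finally show ?thesis .
    qed
    moreover have "b k \<le> a k + measure_pmf.prob \<omega> X"
    proof -
      have "b k \<le> measure_pmf.prob \<omega> (fst -` E \<union> X)" unfolding bk
        by (rule measure_pmf.finite_measure_mono[OF sub2]) simp
      also have "\<dots> \<le> a k + measure_pmf.prob \<omega> X" unfolding ak
        by (rule measure_Un_le) simp_all
      finally show ?thesis .
    qed
    ultimately show "\<bar>measure_pmf.prob (\<tau> \<rho>) E - measure_pmf.prob (\<tau> \<sigma>) E\<bar> < \<epsilon>"
      using k1 k2 mX unfolding dist_real_def by linarith
  qed
  show ?case
    using inn labs classes unfolding R_def \<tau>_def lb_def by simp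
qed




lemma bounded01_conv_subseq:
  fixes f :: "nat \<Rightarrow> real"
  assumes "\<And>k. 0 \<le> f k" "\<And>k. f k \<le> 1"
  shows "\<exists>r. strict_mono r \<and> convergent (f \<circ> r)"
proof -
  obtain r where r: "strict_mono r" "monoseq (\<lambda>n. f (r n))" using seq_monosub[of f] by blast
  have "Bseq (\<lambda>n. f (r n))" by (rule BseqI'[where K=1]) (use assms in auto)
  then have "convergent (\<lambda>n. f (r n))" using r(2) by (rule Bseq_monoseq_convergent)
  then show ?thesis using r(1) by (auto simp: o_def)
qed

lemma exists_limit_strategy:
  fixes S :: "'s set" and Act :: "'a set" and \<alpha>s :: "nat \<Rightarrow> (('s,'a) path \<Rightarrow> 'a pmf)"
  assumes mdp: "is_mdp S Act L phi lab" and strat: "\<And>i. is_strategy S Act phi (\<alpha>s i)"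
  shows "\<exists>q \<alpha>. strict_mono q \<and> is_strategy S Act phi \<alpha> \<and> (\<forall>\<rho>. finite (set_pmf (\<alpha> \<rho>))) \<and>
     (\<forall>\<rho> m. is_path S phi \<rho> \<longrightarrow> (\<lambda>k. pmf (\<alpha>s (q k) \<rho>) m) \<longlonglongrightarrow> pmf (\<alpha> \<rho>) m)"
proof -
  define J where "J = {\<rho>. is_path S phi \<rho>} \<times> Act"
  have finS: "finite S" and finA: "finite Act" using mdp unfolding is_mdp_def by auto
  have cJ: "countable J"
  proof -
    have "{\<rho>. is_path S phi \<rho>} \<subseteq> S \<times> lists (Act \<times> S)"
    proof
      fix \<rho> :: "('s,'a) path" assume "\<rho> \<in> {\<rho>. is_path S phi \<rho>}"
      then have "fst \<rho> \<in> S" "valid_steps phi (fst \<rho>) (snd \<rho>)" unfolding is_path_def by auto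
      moreover have "valid_steps phi s xs \<Longrightarrow> s \<in> S \<Longrightarrow> xs \<in> lists (Act \<times> S)" for s xs
      proof (induction xs arbitrary: s)
        case Nil then show ?case by simp
      next
        case (Cons a xs)
        obtain m t where a: "a = (m,t)" by force
        from Cons.prems a obtain \<mu> where \<mu>: "phi s m = Some \<mu>" "pmf \<mu> t > 0" and v: "valid_steps phi t xs" by auto
        have "m \<in> Act" "set_pmf \<mu> \<subseteq> S" using mdp \<mu>(1) unfolding is_mdp_def by blast+
        moreover have "t \<in> set_pmf \<mu>" using \<mu>(2) by (simp add: set_pmf_iff)
        ultimately have "m \<in> Act" "t \<in> S" by auto
        then show ?case using Cons.IH[OF v] a by simp
      qed
      ultimately show "\<rho> \<in> S \<times> lists (Act \<times> S)" by (cases \<rho>) auto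
    qed
    moreover have "countable (S \<times> lists (Act \<times> S))"
      using finS finA by (intro countable_SIGMA countable_lists countable_finite) auto
    ultimately have "countable {\<rho>. is_path S phi \<rho>}" by (rule countable_subset)
    then show ?thesis unfolding J_def using finA by (intro countable_SIGMA) (auto intro: countable_finite)
  qed
  define e where "e = from_nat_into J"
  define P where "P n (s :: nat \<Rightarrow> nat) \<longleftrightarrow> convergent (\<lambda>k. pmf (\<alpha>s (s k) (fst (e n))) (snd (e n)))" for n s
  interpret subseqs P
  proof
    fix n and s :: "nat \<Rightarrow> nat" assume "strict_mono s"
    obtain r where "strict_mono r" "convergent ((\<lambda>k. pmf (\<alpha>s (s k) (fst (e n))) (snd (e n))) \<circ> r)"
      using bounded01_conv_subseq[of "\<lambda>k. pmf (\<alpha>s (s k) (fst (e n))) (snd (e n))"] by (auto simp: pmf_le_1)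
    then show "\<exists>r'. strict_mono r' \<and> P n (s \<circ> r')" unfolding P_def by (auto simp: o_def)
  qed
  define q where "q = diagseq"
  have qm: "strict_mono q" unfolding q_def by (rule subseq_diagseq)
  have Pq: "P n q" for n
  proof -
    have "P n (diagseq \<circ> (+) (Suc n))"
    proof (rule diagseq_holds)
      fix r s :: "nat \<Rightarrow> nat" and n assume "strict_mono r" "P n s"
      then have "convergent ((\<lambda>k. pmf (\<alpha>s (s k) (fst (e n))) (snd (e n))) \<circ> r)"
        unfolding P_def by (intro convergent_subseq_convergent)
      then show "P n (s \<circ> r)" unfolding P_def by (simp add: o_def)
    qed
    then have "convergent (\<lambda>k. pmf (\<alpha>s (diagseq (k + Suc n)) (fst (e n))) (snd (e n)))"
      unfolding P_def by (simp add: o_def add.commute)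
    then show ?thesis unfolding P_def q_def by (rule iffD1[OF convergent_ignore_initial_segment])
  qed
  have convJ: "convergent (\<lambda>k. pmf (\<alpha>s (q k) \<rho>) m)" if "is_path S phi \<rho>" "m \<in> Act" for \<rho> m
  proof -
    have "(\<rho>,m) \<in> J" using that unfolding J_def by auto
    then have "J \<noteq> {}" by auto
    then have "(\<rho>,m) \<in> range e" unfolding e_def using range_from_nat_into[OF _ cJ] \<open>(\<rho>,m) \<in> J\<close> by simp
    then obtain n where "e n = (\<rho>,m)" by (rule rangeE) simp
    then show ?thesis using Pq[of n] unfolding P_def by simp
  qed
  have supp_i: "set_pmf (\<alpha>s i \<rho>) \<subseteq> {m \<in> Act. phi (path_last \<rho>) m \<noteq> None}" if "is_path S phi \<rho>" for i \<rho>
    by (rule strat_supp[OF strat that])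
  define f where "f \<rho> m = (if m \<in> Act then lim (\<lambda>k. pmf (\<alpha>s (q k) \<rho>) m) else 0)" for \<rho> m
  have ftend: "(\<lambda>k. pmf (\<alpha>s (q k) \<rho>) m) \<longlonglongrightarrow> f \<rho> m" if "is_path S phi \<rho>" for \<rho> m
  proof (cases "m \<in> Act")
    case True then show ?thesis unfolding f_def using convJ[OF that True]
      by (simp add: convergent_LIMSEQ_iff)
  next
    case False
    then have "pmf (\<alpha>s (q k) \<rho>) m = 0" for k using supp_i[OF that] by (auto simp: pmf_eq_0_set_pmf)
    then show ?thesis unfolding f_def using False by simp
  qed
  have fnn: "0 \<le> f \<rho> m" if "is_path S phi \<rho>" for \<rho> m
    using ftend[OF that] by (rule LIMSEQ_le_const) simp
  have fsum: "(\<Sum>m\<in>Act. f \<rho> m) = 1" if "is_path S phi \<rho>" for \<rho>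
  proof -
    have "(\<lambda>k. \<Sum>m\<in>Act. pmf (\<alpha>s (q k) \<rho>) m) \<longlonglongrightarrow> (\<Sum>m\<in>Act. f \<rho> m)"
      by (intro tendsto_sum ftend that)
    moreover have "(\<Sum>m\<in>Act. pmf (\<alpha>s (q k) \<rho>) m) = 1" for k
      using supp_i[OF that] finA by (intro sum_pmf_eq_1) auto
    ultimately have "(\<lambda>k. 1::real) \<longlonglongrightarrow> (\<Sum>m\<in>Act. f \<rho> m)" by simp
    then show ?thesis by (simp add: LIMSEQ_const_iff)
  qed
  have fout: "f \<rho> m = 0" if "m \<notin> Act" for \<rho> m unfolding f_def using that by simp
  have fint: "(\<integral>\<^sup>+m. f \<rho> m \<partial>count_space UNIV) = 1" if "is_path S phi \<rho>" for \<rho>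
  proof -
    have "(\<integral>\<^sup>+m. f \<rho> m \<partial>count_space UNIV) = (\<integral>\<^sup>+m. ennreal (f \<rho> m) * indicator Act m \<partial>count_space UNIV)"
      by (intro nn_integral_cong) (auto simp: fout split: split_indicator)
    also have "\<dots> = (\<integral>\<^sup>+m. ennreal (f \<rho> m) \<partial>count_space Act)"
      by (simp add: nn_integral_count_space_indicator)
    also have "\<dots> = (\<Sum>m\<in>Act. ennreal (f \<rho> m))" using finA by (rule nn_integral_count_space_finite)
    also have "\<dots> = ennreal (\<Sum>m\<in>Act. f \<rho> m)" using fnn[OF that] by (intro sum_ennreal) auto
    finally show ?thesis using fsum[OF that] by simp
  qed
  define \<alpha> where "\<alpha> \<rho> = (if is_path S phi \<rho> then embed_pmf (f \<rho>) else return_pmf undefined)" for \<rho>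
  have pmf\<alpha>: "pmf (\<alpha> \<rho>) m = f \<rho> m" if "is_path S phi \<rho>" for \<rho> m
    unfolding \<alpha>_def using that by (simp add: pmf_embed_pmf fnn fint)
  have conv: "(\<lambda>k. pmf (\<alpha>s (q k) \<rho>) m) \<longlonglongrightarrow> pmf (\<alpha> \<rho>) m" if "is_path S phi \<rho>" for \<rho> m
    using ftend[OF that] pmf\<alpha>[OF that] by simp
  have st: "is_strategy S Act phi \<alpha>"
    unfolding is_strategy_def
  proof (intro allI impI subsetI)
    fix \<rho> m assume p: "is_path S phi \<rho>" and m: "m \<in> set_pmf (\<alpha> \<rho>)"
    then have pos: "f \<rho> m \<noteq> 0" using pmf\<alpha>[OF p] by (simp add: set_pmf_iff)
    then have mA: "m \<in> Act" using fout by blast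
    have "phi (path_last \<rho>) m \<noteq> None"
    proof
      assume N: "phi (path_last \<rho>) m = None"
      have "m \<notin> set_pmf (\<alpha>s (q k) \<rho>)" for k using supp_i[OF p, of "q k"] N by blast
      then have "pmf (\<alpha>s (q k) \<rho>) m = 0" for k by (simp add: pmf_eq_0_set_pmf)
      then have "f \<rho> m = 0" using LIMSEQ_unique[OF ftend[OF p, of m]] by simp
      then show False using pos by simp
    qed
    then show "m \<in> {m \<in> Act. phi (path_last \<rho>) m \<noteq> None}" using mA by simp
  qed
  have fin: "finite (set_pmf (\<alpha> \<rho>))" for \<rho>
  proof (cases "is_path S phi \<rho>")
    case True
    then have "set_pmf (\<alpha> \<rho>) \<subseteq> Act" using st unfolding is_strategy_def by blast
    then show ?thesis using finA by (rule finite_subset)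
  next
    case False then show ?thesis unfolding \<alpha>_def by simp
  qed
  show ?thesis by (rule exI[of _ q], rule exI[of _ \<alpha>]) (use qm st fin conv in auto)
qed




theorem mainTheorem13:
  fixes S :: "'s set" and Act :: "'a set" and L :: "'l set"
    and phi :: "'s \<Rightarrow> 'a \<Rightarrow> 's pmf option" and lab :: "'s \<Rightarrow> 'l"
    and \<alpha>s :: "nat \<Rightarrow> (('s,'a) path \<Rightarrow> 'a pmf)" and S0 :: "'s set"
  assumes "is_mdp S Act L phi lab"
    and "\<And>i. is_strategy S Act phi (\<alpha>s i)"
    and "S0 \<subseteq> S"
    and "liminf (\<lambda>i. SUP st \<in> S0 \<times> S0.
            bisim_dist (induced_trans phi (\<alpha>s i)) (induced_label lab)
              (state_path (fst st)) (state_path (snd st))) = 0"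
  shows "\<exists>\<alpha>. is_strategy S Act phi \<alpha> \<and>
           (\<forall>s\<in>S0. \<forall>t\<in>S0. prob_bisimilar (induced_trans phi \<alpha>) (induced_label lab)
                              (state_path s) (state_path t))"
proof -
  note mdp = assms(1)
  define dd where "dd i = (SUP st \<in> S0 \<times> S0. bisim_dist (induced_trans phi (\<alpha>s i)) (induced_label lab)
              (state_path (fst st)) (state_path (snd st)))" for i
  obtain r where r: "strict_mono r" "(dd \<circ> r) \<longlonglongrightarrow> liminf dd" using liminf_subseq_lim by blast
  have ld: "liminf dd = 0" using assms(4) unfolding dd_def .
  have r0: "(dd \<circ> r) \<longlonglongrightarrow> 0" using r(2) unfolding ld .
  have str: "\<And>i. is_strategy S Act phi ((\<lambda>i. \<alpha>s (r i)) i)" using assms(2) by simp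
  obtain q \<alpha> where q: "strict_mono q" and st: "is_strategy S Act phi \<alpha>"
    and fin: "\<forall>\<rho>. finite (set_pmf (\<alpha> \<rho>))"
    and conv: "\<forall>\<rho> m. is_path S phi \<rho> \<longrightarrow> (\<lambda>k. pmf ((\<lambda>i. \<alpha>s (r i)) (q k) \<rho>) m) \<longlonglongrightarrow> pmf (\<alpha> \<rho>) m"
    using exists_limit_strategy[where \<alpha>s="\<lambda>i. \<alpha>s (r i)", OF mdp assms(2)] by blast
  define \<beta> where "\<beta> k = \<alpha>s (r (q k))" for k
  have st\<beta>: "\<And>k. is_strategy S Act phi (\<beta> k)" unfolding \<beta>_def using assms(2) by simp
  have conv\<beta>: "\<And>\<rho> m. is_path S phi \<rho> \<Longrightarrow> (\<lambda>k. pmf (\<beta> k \<rho>) m) \<longlonglongrightarrow> pmf (\<alpha> \<rho>) m"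
    unfolding \<beta>_def using conv by blast
  have dq: "(\<lambda>k. dd (r (q k))) \<longlonglongrightarrow> 0" using LIMSEQ_subseq_LIMSEQ[OF r0 q] by (simp add: o_def)
  have sp: "is_path S phi (state_path s)" if "s \<in> S0" for s
    using that assms(3) unfolding is_path_def state_path_def by auto
  have key: "(state_path s, state_path t) \<in> bn (induced_trans phi \<alpha>) (induced_label lab) n"
    if s: "s \<in> S0" and t: "t \<in> S0" for s t n
  proof (rule core[OF mdp st\<beta> st conv\<beta> sp[OF s] sp[OF t]])
    fix \<delta> :: ennreal assume \<delta>: "\<delta> > 0"
    have ev: "\<forall>\<^sub>F k in sequentially. dd (r (q k)) < \<delta>" by (rule order_tendstoD(2)[OF dq \<delta>])
    have le: "(bisim_Delta (induced_trans phi (\<beta> k)) (induced_label lab) ^^ n) \<bottom> (state_path s) (state_path t)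
              \<le> dd (r (q k))" for k
    proof -
      have "(bisim_Delta (induced_trans phi (\<beta> k)) (induced_label lab) ^^ n) \<bottom>
           \<le> bisim_dist (induced_trans phi (\<beta> k)) (induced_label lab)" by (rule Delta_pow_le_dist)
      then have "(bisim_Delta (induced_trans phi (\<beta> k)) (induced_label lab) ^^ n) \<bottom> (state_path s) (state_path t)
           \<le> bisim_dist (induced_trans phi (\<beta> k)) (induced_label lab) (state_path s) (state_path t)"
        unfolding le_fun_def by blast
      also have "\<dots> \<le> dd (r (q k))" unfolding dd_def \<beta>_def
        using SUP_upper[of "(s,t)" "S0 \<times> S0" "\<lambda>st. bisim_dist (induced_trans phi (\<alpha>s (r (q k)))) (induced_label lab)
              (state_path (fst st)) (state_path (snd st))"] s t by simp
      finally show ?thesis .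
    qed
    have "\<forall>\<^sub>F k in sequentially. (bisim_Delta (induced_trans phi (\<beta> k)) (induced_label lab) ^^ n) \<bottom> (state_path s) (state_path t) < \<delta>"
      using ev by (rule eventually_mono) (rule le_less_trans[OF le])
    then show "\<exists>\<^sub>F k in sequentially. (bisim_Delta (induced_trans phi (\<beta> k)) (induced_label lab) ^^ n) \<bottom> (state_path s) (state_path t) < \<delta>"
      by (rule eventually_frequently[rotated]) simp
  qed
  have finT: "\<And>x. finite (set_pmf (induced_trans phi \<alpha> x))"
    using trans_finite_support[OF mdp] fin by blast
  have bis: "prob_bisimulation (induced_trans phi \<alpha>) (induced_label lab) (\<Inter>n. bn (induced_trans phi \<alpha>) (induced_label lab) n)"
    by (rule bn_bisim[OF finT])
  have "prob_bisimilar (induced_trans phi \<alpha>) (induced_label lab) (state_path s) (state_path t)"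
    if "s \<in> S0" "t \<in> S0" for s t
    unfolding prob_bisimilar_def using bis key[OF that] by blast
  then show ?thesis using st by blast
qed


end
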